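(* Let $G$ be a finite group, and let $a_1,a_2,a_3,a_4$ denote independent uniformly random elements of $G$. Then \begin{align*} Pr(a_1a_2a_3a_4=a_2a_1a_4a_3)&=Pr(a_1a_2a_3a_4=a_4a_3a_2a_1)=Pr^4(G)\\ &=\frac{\sum_{x,y\in G}|Stab.Prod_2(x,y)|}{|G|^4}\\ &=\sum_{i,k,j=1}^{c(G)}\frac{|\Omega_j|\cdot c_{i,k;j}(G)^2}{|\Omega_i|\cdot|\Omega_k|\cdot|G|^2}\\ &=\sum_{i,k,j=1}^{c(G)}\frac{|\Omega_j|\cdot c_{i,k;j}(G)\cdot c_{k,i;j}(G)}{|\Omega_i|\cdot|\Omega_k|\cdot|G|^2}. \end{align*}
   Context: $c(G)$ is the number of conjugacy classes of $G$, and $\Omega_1,\dots,\Omega_{c(G)}$ are these classes. $Pr^4(G)$ is the probability that $a_1a_2a_3a_4=a_4a_3a_2a_1$ for independent uniformly random $a_i\in G$. For $g_1,\dots,g_n\in G$, $Stab.Prod_n(g_1,\dots,g_n)$ is the set of all tuples $(b_1,\dots,b_n)\in G^n$ such that $b_1^{-1}g_1b_1\cdot b_2^{-1}g_2b_2\cdots b_n^{-1}g_nb_n=g_1g_2\cdots g_n$. For indices $i_1,\dots,i_n,j$, $c_{i_1,\dots,i_n;j}(G)$ is the number of tuples $(x_1,\dots,x_n)$ with $x_t\in\Omega_{i_t}$ for all $t$ and $x_1x_2\cdots x_n=y$, for a fixed $y\in\Omega_j$. This number does not depend on the choice of $y$. *)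

theory Defs
  imports "HOL-Algebra.Group" Complex_Main
begin

definition conj_class :: "('a, 'b) monoid_scheme \<Rightarrow> 'a \<Rightarrow> 'a set" where
  "conj_class G x = {inv\<^bsub>G\<^esub> g \<otimes>\<^bsub>G\<^esub> x \<otimes>\<^bsub>G\<^esub> g | g. g \<in> carrier G}"

definition conj_classes :: "('a, 'b) monoid_scheme \<Rightarrow> 'a set set" where
  "conj_classes G = conj_class G ` carrier G"

definition prob4 :: "('a, 'b) monoid_scheme \<Rightarrow> ('a \<Rightarrow> 'a \<Rightarrow> 'a \<Rightarrow> 'a \<Rightarrow> bool) \<Rightarrow> real" where
  "prob4 G P = real (card {(a1, a2, a3, a4). a1 \<in> carrier G \<and> a2 \<in> carrier G \<and>
       a3 \<in> carrier G \<and> a4 \<in> carrier G \<and> P a1 a2 a3 a4}) / real (card (carrier G)) ^ 4"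

definition Pr4 :: "('a, 'b) monoid_scheme \<Rightarrow> real" where
  "Pr4 G = prob4 G (\<lambda>a1 a2 a3 a4.
     a1 \<otimes>\<^bsub>G\<^esub> a2 \<otimes>\<^bsub>G\<^esub> a3 \<otimes>\<^bsub>G\<^esub> a4 = a4 \<otimes>\<^bsub>G\<^esub> a3 \<otimes>\<^bsub>G\<^esub> a2 \<otimes>\<^bsub>G\<^esub> a1)"

definition stab_prod2 :: "('a, 'b) monoid_scheme \<Rightarrow> 'a \<Rightarrow> 'a \<Rightarrow> ('a \<times> 'a) set" where
  "stab_prod2 G g1 g2 = {(b1, b2). b1 \<in> carrier G \<and> b2 \<in> carrier G \<and>
     (inv\<^bsub>G\<^esub> b1 \<otimes>\<^bsub>G\<^esub> g1 \<otimes>\<^bsub>G\<^esub> b1) \<otimes>\<^bsub>G\<^esub> (inv\<^bsub>G\<^esub> b2 \<otimes>\<^bsub>G\<^esub> g2 \<otimes>\<^bsub>G\<^esub> b2)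
       = g1 \<otimes>\<^bsub>G\<^esub> g2}"

text \<open>Class multiplication coefficient c_{i,k;j}: number of (x1,x2) in Omega_i x Omega_k
  with x1 x2 = y for a fixed (chosen) y in Omega_j.\<close>
definition class_coeff :: "('a, 'b) monoid_scheme \<Rightarrow> 'a set \<Rightarrow> 'a set \<Rightarrow> 'a set \<Rightarrow> nat" where
  "class_coeff G A B C = card {(x1, x2). x1 \<in> A \<and> x2 \<in> B \<and>
     x1 \<otimes>\<^bsub>G\<^esub> x2 = (SOME y. y \<in> C)}"

end

theory Submission
  imports Defs
begin


context group begin

lemma lcanc [simp]: "x \<in> carrier G \<Longrightarrow> y \<in> carrier G \<Longrightarrow> inv x \<otimes> (x \<otimes> y) = y"
  by (simp add: m_assoc[symmetric])
lemma lcanc2 [simp]: "x \<in> carrier G \<Longrightarrow> y \<in> carrier G \<Longrightarrow> x \<otimes> (inv x \<otimes> y) = y"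
  by (simp add: m_assoc[symmetric])

lemmas gsimps = m_assoc inv_mult_group

lemma cnt2: "card {(a1, a2, a3, a4). a1 \<in> carrier G \<and> a2 \<in> carrier G \<and>
       a3 \<in> carrier G \<and> a4 \<in> carrier G \<and> a1 \<otimes> a2 \<otimes> a3 \<otimes> a4 = a2 \<otimes> a1 \<otimes> a4 \<otimes> a3}
  = card (SIGMA x:carrier G. SIGMA y:carrier G. stab_prod2 G x y)"
proof (rule bij_betw_same_card[of "\<lambda>(a1,a2,a3,a4). (a1\<otimes>a2, a3\<otimes>a4, a1, a3)"],
       rule bij_betw_byWitness[where f'="\<lambda>(x,y,b1,b2). (b1, inv b1 \<otimes> x, b2, inv b2 \<otimes> y)"])
qed (auto simp: stab_prod2_def gsimps)

lemma cnt1: "card {(a1, a2, a3, a4). a1 \<in> carrier G \<and> a2 \<in> carrier G \<and>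
       a3 \<in> carrier G \<and> a4 \<in> carrier G \<and> a1 \<otimes> a2 \<otimes> a3 \<otimes> a4 = a4 \<otimes> a3 \<otimes> a2 \<otimes> a1}
  = card {(x,y,b1,b2). x \<in> carrier G \<and> y \<in> carrier G \<and> b1 \<in> carrier G \<and> b2 \<in> carrier G \<and>
        (inv b2 \<otimes> y \<otimes> b2) \<otimes> (inv b1 \<otimes> x \<otimes> b1) = x \<otimes> y}"
proof (rule bij_betw_same_card[of "\<lambda>(a1,a2,a3,a4). (a1\<otimes>a2, a3\<otimes>a4, a1, a3)"],
       rule bij_betw_byWitness[where f'="\<lambda>(x,y,b1,b2). (b1, inv b1 \<otimes> x, b2, inv b2 \<otimes> y)"])
qed (auto simp: gsimps)


lemma swap_eq:
  assumes [simp]: "x \<in> carrier G" "y \<in> carrier G" "b1 \<in> carrier G" "b2 \<in> carrier G"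
  shows "(inv b2 \<otimes> y \<otimes> b2) \<otimes> (inv b1 \<otimes> x \<otimes> b1) = x \<otimes> y \<longleftrightarrow>
   (inv (b1 \<otimes> x) \<otimes> inv x \<otimes> (b1 \<otimes> x)) \<otimes> (inv (b2 \<otimes> x) \<otimes> inv y \<otimes> (b2 \<otimes> x)) = inv x \<otimes> inv y"
proof -
  have e1: "(inv (b1 \<otimes> x) \<otimes> inv x \<otimes> (b1 \<otimes> x)) \<otimes> (inv (b2 \<otimes> x) \<otimes> inv y \<otimes> (b2 \<otimes> x))
     = inv x \<otimes> inv ((inv b2 \<otimes> y \<otimes> b2) \<otimes> (inv b1 \<otimes> x \<otimes> b1)) \<otimes> x"
    by (simp add: gsimps)
  have e2: "inv x \<otimes> inv y = inv x \<otimes> inv (x \<otimes> y) \<otimes> x"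
    by (simp add: gsimps)
  have inj: "inv x \<otimes> inv u \<otimes> x = inv x \<otimes> inv v \<otimes> x \<longleftrightarrow> u = v" if "u \<in> carrier G" "v \<in> carrier G" for u v
    using that inv_inj by (auto simp: inj_on_def)
  show ?thesis unfolding e1 e2 by (rule inj[symmetric]) auto
qed

lemma aux:
  assumes h: "a \<in> carrier G" "b \<in> carrier G" "c1 \<in> carrier G" "c2 \<in> carrier G"
    "(inv c1 \<otimes> a \<otimes> c1) \<otimes> (inv c2 \<otimes> b \<otimes> c2) = a \<otimes> b"
  shows "(inv (c2 \<otimes> a) \<otimes> inv b \<otimes> (c2 \<otimes> a)) \<otimes> (inv (c1 \<otimes> a) \<otimes> inv a \<otimes> (c1 \<otimes> a)) = inv a \<otimes> inv b"
proof -
  have "c1 \<otimes> a \<otimes> inv a = c1" "c2 \<otimes> a \<otimes> inv a = c2" using h by (simp_all add: m_assoc)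
  with swap_eq[of "inv a" "inv b" "c1 \<otimes> a" "c2 \<otimes> a"] h show ?thesis by simp
qed

lemma cnt1b: "card {(x,y,b1,b2). x \<in> carrier G \<and> y \<in> carrier G \<and> b1 \<in> carrier G \<and> b2 \<in> carrier G \<and>
        (inv b2 \<otimes> y \<otimes> b2) \<otimes> (inv b1 \<otimes> x \<otimes> b1) = x \<otimes> y}
   = card (SIGMA x:carrier G. SIGMA y:carrier G. stab_prod2 G x y)"
proof (rule bij_betw_same_card[of "\<lambda>(x,y,b1,b2). (inv x, inv y, b1 \<otimes> x, b2 \<otimes> x)"],
       rule bij_betw_byWitness[where f'="\<lambda>(a,b,c1,c2). (inv a, inv b, c1 \<otimes> a, c2 \<otimes> a)"])
  show "(\<lambda>(x,y,b1,b2). (inv x, inv y, b1 \<otimes> x, b2 \<otimes> x)) ` {(x,y,b1,b2). x \<in> carrier G \<and> y \<in> carrier G \<and> b1 \<in> carrier G \<and> b2 \<in> carrier G \<and>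
        (inv b2 \<otimes> y \<otimes> b2) \<otimes> (inv b1 \<otimes> x \<otimes> b1) = x \<otimes> y} \<subseteq> (SIGMA x:carrier G. SIGMA y:carrier G. stab_prod2 G x y)"
    using swap_eq by (auto simp: stab_prod2_def)
  show "(\<lambda>(a,b,c1,c2). (inv a, inv b, c1 \<otimes> a, c2 \<otimes> a)) ` (SIGMA x:carrier G. SIGMA y:carrier G. stab_prod2 G x y) \<subseteq>
    {(x,y,b1,b2). x \<in> carrier G \<and> y \<in> carrier G \<and> b1 \<in> carrier G \<and> b2 \<in> carrier G \<and>
        (inv b2 \<otimes> y \<otimes> b2) \<otimes> (inv b1 \<otimes> x \<otimes> b1) = x \<otimes> y}"
    using aux by (auto simp: stab_prod2_def)
qed (auto simp: m_assoc stab_prod2_def)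

end



context group begin

definition cen :: "'a \<Rightarrow> 'a set" where "cen x = {g \<in> carrier G. inv g \<otimes> x \<otimes> g = x}"

lemma cc_sub: "conj_class G x \<subseteq> carrier G" if "x \<in> carrier G"
  using that by (auto simp: conj_class_def)

lemma cc_self: "x \<in> carrier G \<Longrightarrow> x \<in> conj_class G x"
  unfolding conj_class_def by (rule CollectI, rule exI[of _ \<one>]) simp

lemma cc_conj: "x \<in> carrier G \<Longrightarrow> g \<in> carrier G \<Longrightarrow> inv g \<otimes> x \<otimes> g \<in> conj_class G x"
  unfolding conj_class_def by blast

lemma cc_trans: assumes "x \<in> carrier G" "y \<in> conj_class G x" shows "conj_class G y \<subseteq> conj_class G x"
proof
  fix z assume "z \<in> conj_class G y"
  from assms obtain g where g: "g \<in> carrier G" "y = inv g \<otimes> x \<otimes> g" by (auto simp: conj_class_def)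
  from \<open>z \<in> conj_class G y\<close> obtain h where h: "h \<in> carrier G" "z = inv h \<otimes> y \<otimes> h" by (auto simp: conj_class_def)
  have "z = inv (g \<otimes> h) \<otimes> x \<otimes> (g \<otimes> h)" using g h assms by (simp add: gsimps)
  then show "z \<in> conj_class G x" using g h assms cc_conj by auto
qed

lemma cc_eq: assumes "x \<in> carrier G" "y \<in> conj_class G x" shows "conj_class G y = conj_class G x"
proof
  show "conj_class G y \<subseteq> conj_class G x" by (rule cc_trans[OF assms])
  from assms obtain g where g: "g \<in> carrier G" "y = inv g \<otimes> x \<otimes> g" by (auto simp: conj_class_def)
  have y: "y \<in> carrier G" using g assms by simp
  have "x = inv (inv g) \<otimes> y \<otimes> inv g" using g assms by (simp add: gsimps)
  then have "x \<in> conj_class G y" using cc_conj[OF y, of "inv g"] g by simp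
  then show "conj_class G x \<subseteq> conj_class G y" by (rule cc_trans[OF y])
qed

lemma classes_sub: "A \<in> conj_classes G \<Longrightarrow> A \<subseteq> carrier G"
  unfolding conj_classes_def using cc_sub by blast

lemma classes_eq: assumes "A \<in> conj_classes G" "a \<in> A" shows "conj_class G a = A"
proof -
  from assms(1) obtain x where x: "x \<in> carrier G" "A = conj_class G x" unfolding conj_classes_def by blast
  show ?thesis using cc_eq[OF x(1)] assms(2) x(2) by simp
qed

lemma classes_closed: assumes "A \<in> conj_classes G" "a \<in> A" "g \<in> carrier G" shows "inv g \<otimes> a \<otimes> g \<in> A"
proof -
  have a: "a \<in> carrier G" using classes_sub[OF assms(1)] assms(2) by blast
  show ?thesis using cc_conj[OF a assms(3)] classes_eq[OF assms(1,2)] by simp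
qed

lemma classes_ne: "A \<in> conj_classes G \<Longrightarrow> A \<noteq> {}"
  unfolding conj_classes_def using cc_self by blast

lemma classes_Union: "\<Union>(conj_classes G) = carrier G"
proof
  show "\<Union>(conj_classes G) \<subseteq> carrier G" using classes_sub by blast
  show "carrier G \<subseteq> \<Union>(conj_classes G)"
  proof
    fix x assume x: "x \<in> carrier G"
    then have "conj_class G x \<in> conj_classes G" unfolding conj_classes_def by blast
    with cc_self[OF x] show "x \<in> \<Union>(conj_classes G)" by blast
  qed
qed

lemma classes_disj: assumes "A \<in> conj_classes G" "B \<in> conj_classes G" "A \<noteq> B" shows "A \<inter> B = {}"
proof (rule ccontr)
  assume "A \<inter> B \<noteq> {}"
  then obtain a where "a \<in> A" "a \<in> B" by blast
  then show False using classes_eq[OF assms(1)] classes_eq[OF assms(2)] assms(3) by metis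
qed

lemma sum_classes:
  assumes "finite (carrier G)"
  shows "(\<Sum>x\<in>carrier G. f x) = (\<Sum>A\<in>conj_classes G. \<Sum>x\<in>A. f x)"
proof -
  have "(\<Sum>x\<in>carrier G. f x) = (\<Sum>x\<in>\<Union>(conj_classes G). f x)" by (simp add: classes_Union)
  also have "\<dots> = (\<Sum>A\<in>conj_classes G. \<Sum>x\<in>A. f x)"
  proof -
    have f: "\<forall>A\<in>conj_classes G. finite A" using classes_sub assms finite_subset by blast
    have d: "\<forall>A\<in>conj_classes G. \<forall>B\<in>conj_classes G. A \<noteq> B \<longrightarrow> A \<inter> B = {}"
      using classes_disj by blast
    show ?thesis using sum.Union_disjoint[OF f d, of f] by simp
  qed
  finally show ?thesis .
qed

lemma fiber_card:
  assumes x: "x \<in> carrier G" and y: "y \<in> conj_class G x"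
  shows "card {b \<in> carrier G. inv b \<otimes> x \<otimes> b = y} = card (cen x)"
proof -
  from y obtain g where g: "g \<in> carrier G" "y = inv g \<otimes> x \<otimes> g" by (auto simp: conj_class_def)
  have "bij_betw (\<lambda>c. c \<otimes> g) (cen x) {b \<in> carrier G. inv b \<otimes> x \<otimes> b = y}"
  proof (rule bij_betw_byWitness[where f'="\<lambda>b. b \<otimes> inv g"])
    show "(\<lambda>c. c \<otimes> g) ` cen x \<subseteq> {b \<in> carrier G. inv b \<otimes> x \<otimes> b = y}"
    proof (rule image_subsetI)
      fix c assume c: "c \<in> cen x"
      then have "c \<in> carrier G" "inv c \<otimes> x \<otimes> c = x" by (auto simp: cen_def)
      note cc = this
      have "inv (c \<otimes> g) \<otimes> x \<otimes> (c \<otimes> g) = inv g \<otimes> (inv c \<otimes> x \<otimes> c) \<otimes> g"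
        using g x cc(1) by (simp add: gsimps)
      then show "c \<otimes> g \<in> {b \<in> carrier G. inv b \<otimes> x \<otimes> b = y}"
        using g x cc by simp
    qed
    show "(\<lambda>b. b \<otimes> inv g) ` {b \<in> carrier G. inv b \<otimes> x \<otimes> b = y} \<subseteq> cen x"
    proof (rule image_subsetI)
      fix b assume "b \<in> {b \<in> carrier G. inv b \<otimes> x \<otimes> b = y}"
      then have b: "b \<in> carrier G" "inv b \<otimes> x \<otimes> b = y" by auto
      have "inv (b \<otimes> inv g) \<otimes> x \<otimes> (b \<otimes> inv g) = g \<otimes> (inv b \<otimes> x \<otimes> b) \<otimes> inv g"
        using b(1) g(1) x by (simp add: gsimps)
      also have "\<dots> = g \<otimes> y \<otimes> inv g" by (simp only: b(2))
      also have "\<dots> = x" using g x by (simp add: gsimps)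
      finally show "b \<otimes> inv g \<in> cen x" using b g by (simp add: cen_def)
    qed
  qed (use g in \<open>auto simp: m_assoc cen_def\<close>)
  then show ?thesis by (simp add: bij_betw_same_card)
qed

lemma orbit_stab:
  assumes fin: "finite (carrier G)" and x: "x \<in> carrier G"
  shows "card (conj_class G x) * card (cen x) = card (carrier G)"
proof -
  have "card (carrier G) = (\<Sum>y\<in>conj_class G x. card {b \<in> carrier G. inv b \<otimes> x \<otimes> b = y})"
  proof -
    have sub: "(\<lambda>b. inv b \<otimes> x \<otimes> b) ` carrier G \<subseteq> conj_class G x" using cc_conj[OF x] by blast
    show ?thesis using sum.group[OF fin finite_subset[OF cc_sub[OF x] fin] sub, of "\<lambda>_. 1::nat"] by simp
  qed
  also have "\<dots> = card (conj_class G x) * card (cen x)" using fiber_card[OF x] by simp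
  finally show ?thesis by simp
qed

end



context group begin

definition ncnt :: "'a set \<Rightarrow> 'a set \<Rightarrow> 'a \<Rightarrow> nat" where
  "ncnt A B z = card {(x1, x2). x1 \<in> A \<and> x2 \<in> B \<and> x1 \<otimes> x2 = z}"

lemma stab_card:
  assumes fin: "finite (carrier G)" and x: "x \<in> carrier G" and y: "y \<in> carrier G"
  shows "card (stab_prod2 G x y) = ncnt (conj_class G x) (conj_class G y) (x \<otimes> y) * card (cen x) * card (cen y)"
proof -
  let ?S = "stab_prod2 G x y"
  let ?T = "{(x1, x2). x1 \<in> conj_class G x \<and> x2 \<in> conj_class G y \<and> x1 \<otimes> x2 = x \<otimes> y}"
  let ?f = "\<lambda>(b1,b2). (inv b1 \<otimes> x \<otimes> b1, inv b2 \<otimes> y \<otimes> b2)"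
  have finS: "finite ?S"
    by (rule finite_subset[of _ "carrier G \<times> carrier G"]) (auto simp: stab_prod2_def fin)
  have finT: "finite ?T"
    by (rule finite_subset[of _ "carrier G \<times> carrier G"]) (use cc_sub x y fin in auto)
  have sub: "?f ` ?S \<subseteq> ?T" using cc_conj x y by (auto simp: stab_prod2_def)
  have fib: "{s \<in> ?S. ?f s = p} = {b \<in> carrier G. inv b \<otimes> x \<otimes> b = fst p} \<times> {b \<in> carrier G. inv b \<otimes> y \<otimes> b = snd p}"
    if "p \<in> ?T" for p
    using that by (auto simp: stab_prod2_def)
  have "card ?S = (\<Sum>p\<in>?T. card {s \<in> ?S. ?f s = p})"
    using sum.group[OF finS finT sub, of "\<lambda>_. 1::nat"] by simp
  also have "\<dots> = (\<Sum>p\<in>?T. card (cen x) * card (cen y))"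
  proof (rule sum.cong[OF refl])
    fix p assume p: "p \<in> ?T"
    then have "fst p \<in> conj_class G x" "snd p \<in> conj_class G y" by auto
    then show "card {s \<in> ?S. ?f s = p} = card (cen x) * card (cen y)"
      unfolding fib[OF p] card_cartesian_product using fiber_card x y by simp
  qed
  also have "\<dots> = card ?T * card (cen x) * card (cen y)" by simp
  finally show ?thesis unfolding ncnt_def by simp
qed

lemma ncnt_conj:
  assumes A: "A \<in> conj_classes G" and B: "B \<in> conj_classes G" and z: "z \<in> carrier G" and g: "g \<in> carrier G"
  shows "ncnt A B (inv g \<otimes> z \<otimes> g) = ncnt A B z"
proof -
  have sA: "A \<subseteq> carrier G" "B \<subseteq> carrier G" using classes_sub A B by auto
  have "bij_betw (\<lambda>(x,y). (inv g \<otimes> x \<otimes> g, inv g \<otimes> y \<otimes> g))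
     {(x1, x2). x1 \<in> A \<and> x2 \<in> B \<and> x1 \<otimes> x2 = z}
     {(x1, x2). x1 \<in> A \<and> x2 \<in> B \<and> x1 \<otimes> x2 = inv g \<otimes> z \<otimes> g}"
  proof (rule bij_betw_byWitness[where f'="\<lambda>(x,y). (inv (inv g) \<otimes> x \<otimes> inv g, inv (inv g) \<otimes> y \<otimes> inv g)"])
    show "(\<lambda>(x,y). (inv g \<otimes> x \<otimes> g, inv g \<otimes> y \<otimes> g)) ` {(x1, x2). x1 \<in> A \<and> x2 \<in> B \<and> x1 \<otimes> x2 = z}
      \<subseteq> {(x1, x2). x1 \<in> A \<and> x2 \<in> B \<and> x1 \<otimes> x2 = inv g \<otimes> z \<otimes> g}"
    proof (rule image_subsetI)
      fix p assume "p \<in> {(x1, x2). x1 \<in> A \<and> x2 \<in> B \<and> x1 \<otimes> x2 = z}"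
      then obtain a b where p: "p = (a,b)" "a \<in> A" "b \<in> B" "a \<otimes> b = z" by auto
      have ab: "a \<in> carrier G" "b \<in> carrier G" using p sA by auto
      have "(inv g \<otimes> a \<otimes> g) \<otimes> (inv g \<otimes> b \<otimes> g) = inv g \<otimes> (a \<otimes> b) \<otimes> g" using ab g by (simp add: gsimps)
      then show "(\<lambda>(x,y). (inv g \<otimes> x \<otimes> g, inv g \<otimes> y \<otimes> g)) p \<in> {(x1, x2). x1 \<in> A \<and> x2 \<in> B \<and> x1 \<otimes> x2 = inv g \<otimes> z \<otimes> g}"
        using p classes_closed[OF A] classes_closed[OF B] g by simp
    qed
    show "(\<lambda>(x,y). (inv (inv g) \<otimes> x \<otimes> inv g, inv (inv g) \<otimes> y \<otimes> inv g)) ` {(x1, x2). x1 \<in> A \<and> x2 \<in> B \<and> x1 \<otimes> x2 = inv g \<otimes> z \<otimes> g}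
      \<subseteq> {(x1, x2). x1 \<in> A \<and> x2 \<in> B \<and> x1 \<otimes> x2 = z}"
    proof (rule image_subsetI)
      fix p assume "p \<in> {(x1, x2). x1 \<in> A \<and> x2 \<in> B \<and> x1 \<otimes> x2 = inv g \<otimes> z \<otimes> g}"
      then obtain a b where p: "p = (a,b)" "a \<in> A" "b \<in> B" "a \<otimes> b = inv g \<otimes> z \<otimes> g" by auto
      have ab: "a \<in> carrier G" "b \<in> carrier G" using p sA by auto
      have "(inv (inv g) \<otimes> a \<otimes> inv g) \<otimes> (inv (inv g) \<otimes> b \<otimes> inv g) = inv (inv g) \<otimes> (a \<otimes> b) \<otimes> inv g"
        using ab g by (simp add: gsimps)
      also have "\<dots> = inv (inv g) \<otimes> (inv g \<otimes> z \<otimes> g) \<otimes> inv g" by (simp only: p(4))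
      also have "\<dots> = z" using g z by (simp add: gsimps)
      finally show "(\<lambda>(x,y). (inv (inv g) \<otimes> x \<otimes> inv g, inv (inv g) \<otimes> y \<otimes> inv g)) p \<in> {(x1, x2). x1 \<in> A \<and> x2 \<in> B \<and> x1 \<otimes> x2 = z}"
        using p classes_closed[OF A p(2) inv_closed[OF g]] classes_closed[OF B p(3) inv_closed[OF g]] g by simp
    qed
  qed (use sA g in \<open>auto simp: gsimps\<close>)
  then show ?thesis unfolding ncnt_def by (simp add: bij_betw_same_card)
qed

lemma coeff_eq:
  assumes A: "A \<in> conj_classes G" and B: "B \<in> conj_classes G" and C: "C \<in> conj_classes G" and z: "z \<in> C"
  shows "class_coeff G A B C = ncnt A B z"
proof -
  have s: "(SOME y. y \<in> C) \<in> C" using classes_ne[OF C] by (simp add: some_in_eq)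
  have sG: "(SOME y. y \<in> C) \<in> carrier G" using s classes_sub[OF C] by auto
  have "z \<in> conj_class G (SOME y. y \<in> C)" using classes_eq[OF C s] z by simp
  then obtain g where g: "g \<in> carrier G" "z = inv g \<otimes> (SOME y. y \<in> C) \<otimes> g" by (auto simp: conj_class_def)
  show ?thesis unfolding g(2) ncnt_conj[OF A B sG g(1)] by (simp add: class_coeff_def ncnt_def)
qed

lemma ncnt_swap:
  assumes A: "A \<in> conj_classes G" and B: "B \<in> conj_classes G"
  shows "ncnt A B z = ncnt B A z"
proof -
  have sA: "A \<subseteq> carrier G" "B \<subseteq> carrier G" using classes_sub A B by auto
  have "bij_betw (\<lambda>(x,y). (y, inv y \<otimes> x \<otimes> y))
     {(x1, x2). x1 \<in> A \<and> x2 \<in> B \<and> x1 \<otimes> x2 = z}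
     {(x1, x2). x1 \<in> B \<and> x2 \<in> A \<and> x1 \<otimes> x2 = z}"
  proof (rule bij_betw_byWitness[where f'="\<lambda>(u,v). (inv (inv u) \<otimes> v \<otimes> inv u, u)"])
    show "(\<lambda>(x,y). (y, inv y \<otimes> x \<otimes> y)) ` {(x1, x2). x1 \<in> A \<and> x2 \<in> B \<and> x1 \<otimes> x2 = z}
      \<subseteq> {(x1, x2). x1 \<in> B \<and> x2 \<in> A \<and> x1 \<otimes> x2 = z}"
    proof (rule image_subsetI)
      fix p assume "p \<in> {(x1, x2). x1 \<in> A \<and> x2 \<in> B \<and> x1 \<otimes> x2 = z}"
      then obtain a b where p: "p = (a,b)" "a \<in> A" "b \<in> B" "a \<otimes> b = z" by auto
      have ab: "a \<in> carrier G" "b \<in> carrier G" using p sA by auto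
      have "b \<otimes> (inv b \<otimes> a \<otimes> b) = a \<otimes> b" using ab by (simp add: gsimps)
      then show "(\<lambda>(x,y). (y, inv y \<otimes> x \<otimes> y)) p \<in> {(x1, x2). x1 \<in> B \<and> x2 \<in> A \<and> x1 \<otimes> x2 = z}"
        using p classes_closed[OF A p(2) ab(2)] by simp
    qed
    show "(\<lambda>(u,v). (inv (inv u) \<otimes> v \<otimes> inv u, u)) ` {(x1, x2). x1 \<in> B \<and> x2 \<in> A \<and> x1 \<otimes> x2 = z}
      \<subseteq> {(x1, x2). x1 \<in> A \<and> x2 \<in> B \<and> x1 \<otimes> x2 = z}"
    proof (rule image_subsetI)
      fix p assume "p \<in> {(x1, x2). x1 \<in> B \<and> x2 \<in> A \<and> x1 \<otimes> x2 = z}"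
      then obtain a b where p: "p = (a,b)" "a \<in> B" "b \<in> A" "a \<otimes> b = z" by auto
      have ab: "a \<in> carrier G" "b \<in> carrier G" using p sA by auto
      have "inv (inv a) \<otimes> b \<otimes> inv a \<otimes> a = a \<otimes> b" using ab by (simp add: gsimps)
      then show "(\<lambda>(u,v). (inv (inv u) \<otimes> v \<otimes> inv u, u)) p \<in> {(x1, x2). x1 \<in> A \<and> x2 \<in> B \<and> x1 \<otimes> x2 = z}"
        using p classes_closed[OF A p(3), of "inv a"] ab by simp
    qed
  qed (use sA in \<open>auto simp: gsimps subset_eq\<close>)
  then show ?thesis unfolding ncnt_def by (simp add: bij_betw_same_card)
qed

lemma coeff_swap:
  assumes A: "A \<in> conj_classes G" and B: "B \<in> conj_classes G"
  shows "class_coeff G A B C = class_coeff G B A C"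
  using ncnt_swap[OF A B, of "SOME y. y \<in> C"] by (simp add: class_coeff_def ncnt_def)

end



context group begin

lemma sum_sq:
  assumes fin: "finite (carrier G)" and A: "A \<in> conj_classes G" and B: "B \<in> conj_classes G"
  shows "(\<Sum>x\<in>A. \<Sum>y\<in>B. real (ncnt A B (x \<otimes> y)))
     = (\<Sum>C\<in>conj_classes G. real (card C) * real (class_coeff G A B C) ^ 2)"
proof -
  have sA: "A \<subseteq> carrier G" "B \<subseteq> carrier G" using classes_sub A B by auto
  have fA: "finite A" "finite B" using sA fin finite_subset by auto
  have fAB: "finite (A \<times> B)" using fA by simp
  have sub: "(\<lambda>(x,y). x \<otimes> y) ` (A \<times> B) \<subseteq> carrier G" using sA by auto
  have cnt: "card {p \<in> A \<times> B. (\<lambda>(x,y). x \<otimes> y) p = z} = ncnt A B z" for z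
    unfolding ncnt_def by (rule arg_cong[where f=card]) auto
  have "(\<Sum>x\<in>A. \<Sum>y\<in>B. real (ncnt A B (x \<otimes> y))) = (\<Sum>p\<in>A \<times> B. real (ncnt A B ((\<lambda>(x,y). x \<otimes> y) p)))"
    by (simp add: sum.cartesian_product case_prod_beta')
  also have "\<dots> = (\<Sum>z\<in>carrier G. \<Sum>p\<in>{p \<in> A \<times> B. (\<lambda>(x,y). x \<otimes> y) p = z}. real (ncnt A B ((\<lambda>(x,y). x \<otimes> y) p)))"
    by (rule sum.group[OF fAB fin sub, symmetric])
  also have "\<dots> = (\<Sum>z\<in>carrier G. real (ncnt A B z) ^ 2)"
  proof (rule sum.cong[OF refl])
    fix z
    have "(\<Sum>p\<in>{p \<in> A \<times> B. (\<lambda>(x,y). x \<otimes> y) p = z}. real (ncnt A B ((\<lambda>(x,y). x \<otimes> y) p)))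
       = (\<Sum>p\<in>{p \<in> A \<times> B. (\<lambda>(x,y). x \<otimes> y) p = z}. real (ncnt A B z))"
      by (rule sum.cong) auto
    also have "\<dots> = real (ncnt A B z) ^ 2" using cnt[of z] by (simp add: power2_eq_square)
    finally show "(\<Sum>p\<in>{p \<in> A \<times> B. (\<lambda>(x,y). x \<otimes> y) p = z}. real (ncnt A B ((\<lambda>(x,y). x \<otimes> y) p)))
       = real (ncnt A B z) ^ 2" .
  qed
  also have "\<dots> = (\<Sum>C\<in>conj_classes G. \<Sum>z\<in>C. real (ncnt A B z) ^ 2)"
    by (rule sum_classes[OF fin])
  also have "\<dots> = (\<Sum>C\<in>conj_classes G. \<Sum>z\<in>C. real (class_coeff G A B C) ^ 2)"
    by (rule sum.cong[OF refl], rule sum.cong[OF refl]) (simp add: coeff_eq[OF A B])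
  also have "\<dots> = (\<Sum>C\<in>conj_classes G. real (card C) * real (class_coeff G A B C) ^ 2)"
    by simp
  finally show ?thesis .
qed


lemma stab_sum:
  assumes fin: "finite (carrier G)"
  shows "(\<Sum>x\<in>carrier G. \<Sum>y\<in>carrier G. real (card (stab_prod2 G x y))) / real (card (carrier G)) ^ 4
    = (\<Sum>A\<in>conj_classes G. \<Sum>B\<in>conj_classes G. \<Sum>C\<in>conj_classes G.
           real (card C) * real (class_coeff G A B C) ^ 2
           / (real (card A) * real (card B) * real (card (carrier G)) ^ 2))"
proof -
  define n where "n = real (card (carrier G))"
  have npos: "n > 0" unfolding n_def using fin one_closed by (auto simp: card_gt_0_iff)
  have cpos: "real (card A) > 0" if "A \<in> conj_classes G" for A
    using that classes_ne classes_sub fin finite_subset by (fastforce simp: card_gt_0_iff)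
  have cen_r: "real (card (cen x)) = n / real (card A)" if A: "A \<in> conj_classes G" and x: "x \<in> A" for A x
  proof -
    have xG: "x \<in> carrier G" using classes_sub[OF A] x by auto
    have "card A * card (cen x) = card (carrier G)"
      using orbit_stab[OF fin xG] classes_eq[OF A x] by simp
    then have "real (card A) * real (card (cen x)) = n" unfolding n_def by (metis of_nat_mult)
    then show ?thesis using cpos[OF A] by (simp add: field_simps)
  qed
  have stab_r: "real (card (stab_prod2 G x y)) = real (ncnt A B (x \<otimes> y)) * (n / real (card A)) * (n / real (card B))"
    if A: "A \<in> conj_classes G" and x: "x \<in> A" and B: "B \<in> conj_classes G" and y: "y \<in> B" for A B x y
  proof -
    have xG: "x \<in> carrier G" using classes_sub[OF A] x by auto
    have yG: "y \<in> carrier G" using classes_sub[OF B] y by auto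
    show ?thesis
      unfolding stab_card[OF fin xG yG] classes_eq[OF A x] classes_eq[OF B y]
      using cen_r[OF A x] cen_r[OF B y] by simp
  qed
  let ?F = "\<lambda>x y. real (card (stab_prod2 G x y))"
  have "(\<Sum>x\<in>carrier G. \<Sum>y\<in>carrier G. ?F x y) = (\<Sum>A\<in>conj_classes G. \<Sum>x\<in>A. \<Sum>B\<in>conj_classes G. \<Sum>y\<in>B. ?F x y)"
    by (simp add: sum_classes[OF fin])
  also have "\<dots> = (\<Sum>A\<in>conj_classes G. \<Sum>x\<in>A. \<Sum>B\<in>conj_classes G. \<Sum>y\<in>B.
       real (ncnt A B (x \<otimes> y)) * (n / real (card A)) * (n / real (card B)))"
    by (intro sum.cong refl) (simp add: stab_r)
  also have "\<dots> = (\<Sum>A\<in>conj_classes G. \<Sum>B\<in>conj_classes G. \<Sum>x\<in>A. \<Sum>y\<in>B.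
       real (ncnt A B (x \<otimes> y)) * (n / real (card A)) * (n / real (card B)))"
    by (intro sum.cong refl) (rule sum.swap)
  also have "\<dots> = (\<Sum>A\<in>conj_classes G. \<Sum>B\<in>conj_classes G. (n / real (card A)) * (n / real (card B)) *
       (\<Sum>x\<in>A. \<Sum>y\<in>B. real (ncnt A B (x \<otimes> y))))"
    by (intro sum.cong refl) (simp add: sum_distrib_left mult_ac)
  also have "\<dots> = (\<Sum>A\<in>conj_classes G. \<Sum>B\<in>conj_classes G. (n / real (card A)) * (n / real (card B)) *
       (\<Sum>C\<in>conj_classes G. real (card C) * real (class_coeff G A B C) ^ 2))"
    by (intro sum.cong refl) (simp add: sum_sq[OF fin])
  finally have eq: "(\<Sum>x\<in>carrier G. \<Sum>y\<in>carrier G. ?F x y) = \<dots>" .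
  show ?thesis
    unfolding eq n_def[symmetric] sum_divide_distrib sum_distrib_left
  proof (intro sum.cong refl)
    fix A B C assume A: "A \<in> conj_classes G" and B: "B \<in> conj_classes G"
    show "n / real (card A) * (n / real (card B)) * (real (card C) * real (class_coeff G A B C) ^ 2) / n ^ 4 =
         real (card C) * real (class_coeff G A B C) ^ 2 / (real (card A) * real (card B) * n ^ 2)"
      using npos cpos[OF A] cpos[OF B] by (simp add: field_simps power_numeral_reduce)
  qed
qed

end

theorem mainTheorem7:
  fixes G :: "('a, 'b) monoid_scheme"
  assumes "group G" and "finite (carrier G)"
  shows
   "prob4 G (\<lambda>a1 a2 a3 a4. a1 \<otimes>\<^bsub>G\<^esub> a2 \<otimes>\<^bsub>G\<^esub> a3 \<otimes>\<^bsub>G\<^esub> a4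
                          = a2 \<otimes>\<^bsub>G\<^esub> a1 \<otimes>\<^bsub>G\<^esub> a4 \<otimes>\<^bsub>G\<^esub> a3)
      = prob4 G (\<lambda>a1 a2 a3 a4. a1 \<otimes>\<^bsub>G\<^esub> a2 \<otimes>\<^bsub>G\<^esub> a3 \<otimes>\<^bsub>G\<^esub> a4
                          = a4 \<otimes>\<^bsub>G\<^esub> a3 \<otimes>\<^bsub>G\<^esub> a2 \<otimes>\<^bsub>G\<^esub> a1)
    \<and> prob4 G (\<lambda>a1 a2 a3 a4. a1 \<otimes>\<^bsub>G\<^esub> a2 \<otimes>\<^bsub>G\<^esub> a3 \<otimes>\<^bsub>G\<^esub> a4
                          = a4 \<otimes>\<^bsub>G\<^esub> a3 \<otimes>\<^bsub>G\<^esub> a2 \<otimes>\<^bsub>G\<^esub> a1) = Pr4 G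
    \<and> Pr4 G = (\<Sum>x\<in>carrier G. \<Sum>y\<in>carrier G. real (card (stab_prod2 G x y)))
                / real (card (carrier G)) ^ 4
    \<and> (\<Sum>x\<in>carrier G. \<Sum>y\<in>carrier G. real (card (stab_prod2 G x y)))
                / real (card (carrier G)) ^ 4
      = (\<Sum>A\<in>conj_classes G. \<Sum>B\<in>conj_classes G. \<Sum>C\<in>conj_classes G.
           real (card C) * real (class_coeff G A B C) ^ 2
           / (real (card A) * real (card B) * real (card (carrier G)) ^ 2))
    \<and> (\<Sum>A\<in>conj_classes G. \<Sum>B\<in>conj_classes G. \<Sum>C\<in>conj_classes G.
           real (card C) * real (class_coeff G A B C) ^ 2
           / (real (card A) * real (card B) * real (card (carrier G)) ^ 2))
      = (\<Sum>A\<in>conj_classes G. \<Sum>B\<in>conj_classes G. \<Sum>C\<in>conj_classes G.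
           real (card C) * real (class_coeff G A B C) * real (class_coeff G B A C)
           / (real (card A) * real (card B) * real (card (carrier G)) ^ 2))"
proof -
  interpret group G by (rule assms(1))
  have fin: "finite (carrier G)" by (rule assms(2))
  have finS: "finite (SIGMA x:carrier G. SIGMA y:carrier G. stab_prod2 G x y)"
    by (rule finite_subset[of _ "carrier G \<times> carrier G \<times> carrier G \<times> carrier G"])
       (auto simp: stab_prod2_def fin)
  have cS: "card (SIGMA x:carrier G. SIGMA y:carrier G. stab_prod2 G x y)
     = (\<Sum>x\<in>carrier G. \<Sum>y\<in>carrier G. card (stab_prod2 G x y))"
  proof -
    have fs: "finite (stab_prod2 G x y)" for x y
      by (rule finite_subset[of _ "carrier G \<times> carrier G"]) (auto simp: stab_prod2_def fin)
    show ?thesis using fin fs by (simp add: finite_SigmaI)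
  qed
  have p1: "prob4 G (\<lambda>a1 a2 a3 a4. a1 \<otimes>\<^bsub>G\<^esub> a2 \<otimes>\<^bsub>G\<^esub> a3 \<otimes>\<^bsub>G\<^esub> a4
                          = a4 \<otimes>\<^bsub>G\<^esub> a3 \<otimes>\<^bsub>G\<^esub> a2 \<otimes>\<^bsub>G\<^esub> a1)
     = (\<Sum>x\<in>carrier G. \<Sum>y\<in>carrier G. real (card (stab_prod2 G x y))) / real (card (carrier G)) ^ 4"
    unfolding prob4_def cnt1 cnt1b cS by simp
  have p2: "prob4 G (\<lambda>a1 a2 a3 a4. a1 \<otimes>\<^bsub>G\<^esub> a2 \<otimes>\<^bsub>G\<^esub> a3 \<otimes>\<^bsub>G\<^esub> a4
                          = a2 \<otimes>\<^bsub>G\<^esub> a1 \<otimes>\<^bsub>G\<^esub> a4 \<otimes>\<^bsub>G\<^esub> a3)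
     = (\<Sum>x\<in>carrier G. \<Sum>y\<in>carrier G. real (card (stab_prod2 G x y))) / real (card (carrier G)) ^ 4"
    unfolding prob4_def cnt2 cS by simp
  have p5: "(\<Sum>A\<in>conj_classes G. \<Sum>B\<in>conj_classes G. \<Sum>C\<in>conj_classes G.
           real (card C) * real (class_coeff G A B C) ^ 2
           / (real (card A) * real (card B) * real (card (carrier G)) ^ 2))
      = (\<Sum>A\<in>conj_classes G. \<Sum>B\<in>conj_classes G. \<Sum>C\<in>conj_classes G.
           real (card C) * real (class_coeff G A B C) * real (class_coeff G B A C)
           / (real (card A) * real (card B) * real (card (carrier G)) ^ 2))"
    by (intro sum.cong refl) (simp add: coeff_swap power2_eq_square mult.assoc)
  show ?thesis using p1 p2 p5 stab_sum[OF fin] by (simp add: Pr4_def)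
qed

end
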